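(* Let $\mathcal M=(M,<,+,0,\ldots)$ be a definably complete locally o-minimal expansion of an ordered group. Every definable metric space has the definable curve selection property.
   Context: "Definable" means definable in $\mathcal M$ with parameters. $\mathcal M$ is an expansion of an ordered group with dense order without endpoints; locally o-minimal: for every definable $Y\subseteq M$ and $a\in M$ there is an open interval $I\ni a$ with $Y\cap I$ a finite union of points and open intervals; definably complete: every definable subset of $M$ has sup and inf in $M\cup\{\pm\infty\}$. A definable metric space $(X,d_X)$ is a definable set with a definable $d_X:X\times X\to\{a\ge 0\}$ satisfying $d_X(x,y)=0\iff x=y$, symmetry and triangle inequality, with the topology generated by the balls $\{y:d_X(x,y)<\varepsilon\}$. A definable curve is a definable, not necessarily continuous, map from an open interval. For $\gamma:(a,b)\to X$, $\operatorname{Conv}_{\mathrm{left}}(\gamma)$ is the set of $x\in X$ such that for every $t\in(a,b)$ and every definable neighborhood $A$ of $x$, $\gamma((a,t))\cap A\ne\emptyset$. A definable topological space $(X,\tau)$ has the definable curve selection property if for every definable $C\subseteq X$ and every $x$ in the frontier $\partial_\tau C$, there is a definable curve $\gamma:(a,b)\to C$ with $a\in M$ and $x\in\operatorname{Conv}_{\mathrm{left}}(\gamma)$. *)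

theory Defs
  imports Main
begin

(* The underlying set M is the carrier type 'a.
   A "structure" on M (in the sense of van den Dries) is a family D n of subsets of M^n;
   D n is exactly the family of subsets of M^n definable with parameters in some expansion
   of (M,<,+,0).  Conversely, every family satisfying the axioms below is the family of
   definable sets of the expansion naming all of its members.  Hence quantifying over all
   such families D is quantifying over all expansions M. *)

definition Mpow :: "nat \<Rightarrow> 'a list set" where
  "Mpow n = {xs. length xs = n}"

definition is_structure :: "(nat \<Rightarrow> 'a list set set) \<Rightarrow> bool" where
  "is_structure D \<longleftrightarrow>
     (\<forall>n A. A \<in> D n \<longrightarrow> A \<subseteq> Mpow n) \<and>
     (\<forall>n. Mpow n \<in> D n) \<and>
     (\<forall>n A B. A \<in> D n \<longrightarrow> B \<in> D n \<longrightarrow> A - B \<in> D n) \<and>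
     (\<forall>n A B. A \<in> D n \<longrightarrow> B \<in> D n \<longrightarrow> A \<union> B \<in> D n) \<and>
     (\<forall>n A. A \<in> D n \<longrightarrow> {xs @ [y] | xs y. xs \<in> A} \<in> D (Suc n)) \<and>
     (\<forall>n A. A \<in> D n \<longrightarrow> {y # xs | xs y. xs \<in> A} \<in> D (Suc n)) \<and>
     (\<forall>n A. A \<in> D (Suc n) \<longrightarrow> butlast ` A \<in> D n) \<and>
     (\<forall>n i j. i < n \<longrightarrow> j < n \<longrightarrow> {xs \<in> Mpow n. xs ! i = xs ! j} \<in> D n)"

definition expands_ordered_group :: "(nat \<Rightarrow> ('a::{linorder,group_add}) list set set) \<Rightarrow> bool" where
  "expands_ordered_group D \<longleftrightarrow>
     is_structure D \<and>
     (\<forall>c. {[c]} \<in> D 1) \<and>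
     {[x, y] | x y. x < y} \<in> D 2 \<and>
     {[x, y, z] | x y z. z = x + y} \<in> D 3"

definition dense_ordered_group :: "'a::{linorder,group_add} itself \<Rightarrow> bool" where
  "dense_ordered_group _ \<longleftrightarrow>
     (\<forall>x y z :: 'a. x < y \<longrightarrow> z + x < z + y \<and> x + z < y + z) \<and>
     (\<forall>x y :: 'a. x < y \<longrightarrow> (\<exists>z. x < z \<and> z < y)) \<and>
     (\<forall>x :: 'a. (\<exists>y. y < x) \<and> (\<exists>y. x < y))"

(* open interval with endpoints in M \<union> {-\<infinity>, +\<infinity>}; None stands for -\<infinity> (lower) / +\<infinity> (upper) *)
definition oint :: "'a::linorder option \<Rightarrow> 'a option \<Rightarrow> 'a set" where
  "oint l u = {t. (case l of None \<Rightarrow> True | Some c \<Rightarrow> c < t) \<and>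
                  (case u of None \<Rightarrow> True | Some d \<Rightarrow> t < d)}"

definition dset1 :: "(nat \<Rightarrow> 'a list set set) \<Rightarrow> 'a set \<Rightarrow> bool" where
  "dset1 D Y \<longleftrightarrow> (\<lambda>y. [y]) ` Y \<in> D 1"

definition locally_o_minimal :: "(nat \<Rightarrow> ('a::linorder) list set set) \<Rightarrow> bool" where
  "locally_o_minimal D \<longleftrightarrow>
     (\<forall>Y a. dset1 D Y \<longrightarrow>
        (\<exists>l u. a \<in> oint l u \<and>
           (\<exists>P Q. finite P \<and> finite Q \<and>
               Y \<inter> oint l u = P \<union> (\<Union>(l', u') \<in> Q. oint l' u'))))"

(* every definable subset of M has a supremum and an infimum in M \<union> {\<plusminus>\<infinity>};
   sup Y = -\<infinity> iff Y is empty, sup Y = +\<infinity> iff Y is unbounded above,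
   so this amounts to: nonempty definable sets bounded above (below) have a least upper
   (greatest lower) bound in M *)
definition definably_complete :: "(nat \<Rightarrow> ('a::linorder) list set set) \<Rightarrow> bool" where
  "definably_complete D \<longleftrightarrow>
     (\<forall>Y. dset1 D Y \<longrightarrow> Y \<noteq> {} \<longrightarrow> (\<exists>b. \<forall>y\<in>Y. y \<le> b) \<longrightarrow>
          (\<exists>s. (\<forall>y\<in>Y. y \<le> s) \<and> (\<forall>b. (\<forall>y\<in>Y. y \<le> b) \<longrightarrow> s \<le> b))) \<and>
     (\<forall>Y. dset1 D Y \<longrightarrow> Y \<noteq> {} \<longrightarrow> (\<exists>b. \<forall>y\<in>Y. b \<le> y) \<longrightarrow>
          (\<exists>s. (\<forall>y\<in>Y. s \<le> y) \<and> (\<forall>b. (\<forall>y\<in>Y. b \<le> y) \<longrightarrow> b \<le> s)))"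

definition definable_metric_space ::
  "(nat \<Rightarrow> ('a::{linorder,group_add}) list set set) \<Rightarrow> nat \<Rightarrow> 'a list set
     \<Rightarrow> ('a list \<Rightarrow> 'a list \<Rightarrow> 'a) \<Rightarrow> bool" where
  "definable_metric_space D n X dX \<longleftrightarrow>
     X \<in> D n \<and>
     {xs @ ys @ [dX xs ys] | xs ys. xs \<in> X \<and> ys \<in> X} \<in> D (n + n + 1) \<and>
     (\<forall>x\<in>X. \<forall>y\<in>X. 0 \<le> dX x y) \<and>
     (\<forall>x\<in>X. \<forall>y\<in>X. dX x y = 0 \<longleftrightarrow> x = y) \<and>
     (\<forall>x\<in>X. \<forall>y\<in>X. dX x y = dX y x) \<and>
     (\<forall>x\<in>X. \<forall>y\<in>X. \<forall>z\<in>X. dX x z \<le> dX x y + dX y z)"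

definition mball :: "('a::ord) list set \<Rightarrow> ('a list \<Rightarrow> 'a list \<Rightarrow> 'a) \<Rightarrow> 'a list \<Rightarrow> 'a \<Rightarrow> 'a list set" where
  "mball X dX x e = {y \<in> X. dX x y < e}"

definition mclosure :: "'a list set \<Rightarrow> ('a list \<Rightarrow> 'a list \<Rightarrow> ('a::{linorder,zero})) \<Rightarrow> 'a list set \<Rightarrow> 'a list set" where
  "mclosure X dX C = {x \<in> X. \<forall>e. 0 < e \<longrightarrow> mball X dX x e \<inter> C \<noteq> {}}"

definition mfrontier :: "'a list set \<Rightarrow> ('a list \<Rightarrow> 'a list \<Rightarrow> ('a::{linorder,zero})) \<Rightarrow> 'a list set \<Rightarrow> 'a list set" where
  "mfrontier X dX C = mclosure X dX C - C"

definition def_nbhd :: "(nat \<Rightarrow> ('a::{linorder,zero}) list set set) \<Rightarrow> nat \<Rightarrow> 'a list set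
     \<Rightarrow> ('a list \<Rightarrow> 'a list \<Rightarrow> 'a) \<Rightarrow> 'a list set \<Rightarrow> 'a list \<Rightarrow> bool" where
  "def_nbhd D n X dX A x \<longleftrightarrow> A \<in> D n \<and> A \<subseteq> X \<and> x \<in> A \<and> (\<exists>e. 0 < e \<and> mball X dX x e \<subseteq> A)"

definition conv_left :: "(nat \<Rightarrow> ('a::{linorder,zero}) list set set) \<Rightarrow> nat \<Rightarrow> 'a list set
     \<Rightarrow> ('a list \<Rightarrow> 'a list \<Rightarrow> 'a) \<Rightarrow> 'a \<Rightarrow> 'a option \<Rightarrow> ('a \<Rightarrow> 'a list) \<Rightarrow> 'a list set" where
  "conv_left D n X dX a b \<gamma> =
     {x \<in> X. \<forall>t \<in> oint (Some a) b. \<forall>A. def_nbhd D n X dX A x \<longrightarrow>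
               \<gamma> ` oint (Some a) (Some t) \<inter> A \<noteq> {}}"

definition definable_curve :: "(nat \<Rightarrow> ('a::linorder) list set set) \<Rightarrow> nat \<Rightarrow> 'a list set
     \<Rightarrow> 'a \<Rightarrow> 'a option \<Rightarrow> ('a \<Rightarrow> 'a list) \<Rightarrow> bool" where
  "definable_curve D n C a b \<gamma> \<longleftrightarrow>
     oint (Some a) b \<noteq> {} \<and>
     (\<forall>t \<in> oint (Some a) b. \<gamma> t \<in> C) \<and>
     {t # \<gamma> t | t. t \<in> oint (Some a) b} \<in> D (Suc n)"

definition definable_curve_selection ::
  "(nat \<Rightarrow> ('a::{linorder,zero}) list set set) \<Rightarrow> nat \<Rightarrow> 'a list set \<Rightarrow> ('a list \<Rightarrow> 'a list \<Rightarrow> 'a) \<Rightarrow> bool" where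
  "definable_curve_selection D n X dX \<longleftrightarrow>
     (\<forall>C x. C \<in> D n \<longrightarrow> C \<subseteq> X \<longrightarrow> x \<in> mfrontier X dX C \<longrightarrow>
        (\<exists>a b \<gamma>. definable_curve D n C a b \<gamma> \<and> x \<in> conv_left D n X dX a b \<gamma>))"

end

theory Submission
  imports Defs
begin

lemma Mpow_iff[simp]: "xs \<in> Mpow n \<longleftrightarrow> length xs = n"
  by (simp add: Mpow_def)

definition vcons :: "'b \<Rightarrow> (nat \<Rightarrow> 'b) \<Rightarrow> nat \<Rightarrow> 'b" where
  "vcons a v = (\<lambda>i. case i of 0 \<Rightarrow> a | Suc j \<Rightarrow> v j)"

lemma vcons_0[simp]: "vcons a v 0 = a" and vcons_Suc[simp]: "vcons a v (Suc j) = v j"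
  by (simp_all add: vcons_def)

definition val :: "nat \<Rightarrow> 'b list \<Rightarrow> (nat \<Rightarrow> 'b) \<Rightarrow> nat \<Rightarrow> 'b" where
  "val n xs v = (\<lambda>i. if i < n then xs ! i else v (i - n))"

lemma vcons_val: "length xs = n \<Longrightarrow> vcons a (val n xs v) = val (Suc n) (a # xs) v"
  by (auto simp: vcons_def val_def fun_eq_iff split: nat.split)

locale dstruct =
  fixes D :: "nat \<Rightarrow> ('a::{linorder,group_add}) list set set"
  assumes dog: "dense_ordered_group TYPE('a)"
  and eog: "expands_ordered_group D"
  and lom: "locally_o_minimal D"
  and dc: "definably_complete D"
begin

lemma isS: "is_structure D" using eog by (simp add: expands_ordered_group_def)

lemma D_sub: "A \<in> D n \<Longrightarrow> A \<subseteq> Mpow n" using isS by (simp add: is_structure_def)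
lemma D_len: "A \<in> D n \<Longrightarrow> xs \<in> A \<Longrightarrow> length xs = n" using D_sub by fastforce
lemma D_Mpow: "Mpow n \<in> D n" using isS by (simp add: is_structure_def)
lemma D_diff: "A \<in> D n \<Longrightarrow> B \<in> D n \<Longrightarrow> A - B \<in> D n" using isS by (simp add: is_structure_def)
lemma D_Un: "A \<in> D n \<Longrightarrow> B \<in> D n \<Longrightarrow> A \<union> B \<in> D n" using isS by (simp add: is_structure_def)
lemma D_snoc: "A \<in> D n \<Longrightarrow> {xs @ [y] | xs y. xs \<in> A} \<in> D (Suc n)" using isS by (simp add: is_structure_def)
lemma D_cons: "A \<in> D n \<Longrightarrow> {y # xs | xs y. xs \<in> A} \<in> D (Suc n)" using isS by (simp add: is_structure_def)
lemma D_butlast: "A \<in> D (Suc n) \<Longrightarrow> butlast ` A \<in> D n" using isS by (simp add: is_structure_def)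
lemma D_diag: "i < n \<Longrightarrow> j < n \<Longrightarrow> {xs \<in> Mpow n. xs ! i = xs ! j} \<in> D n"
  using isS by (simp add: is_structure_def)
lemma D_Int: "A \<in> D n \<Longrightarrow> B \<in> D n \<Longrightarrow> A \<inter> B \<in> D n"
proof -
  assume "A \<in> D n" "B \<in> D n"
  then have "A - (A - B) \<in> D n" by (intro D_diff)
  moreover have "A - (A - B) = A \<inter> B" by blast
  ultimately show ?thesis by simp
qed
lemma D_const: "{[c]} \<in> D 1" using eog by (simp add: expands_ordered_group_def)
lemma D_lt: "{[x, y] | x y. x < y} \<in> D 2" using eog by (simp add: expands_ordered_group_def)
lemma D_plus: "{[x, y, z] | x y z. z = x + y} \<in> D 3" using eog by (simp add: expands_ordered_group_def)

lemma D_prefix: "A \<in> D k \<Longrightarrow> {ys @ xs | ys xs. length ys = m \<and> xs \<in> A} \<in> D (m + k)"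
proof (induction m)
  case 0
  then show ?case by simp
next
  case (Suc m)
  have "{ys @ xs | ys xs. length ys = Suc m \<and> xs \<in> A}
      = {y # zs | zs y. zs \<in> {ys @ xs | ys xs. length ys = m \<and> xs \<in> A}}"
  proof (intro set_eqI iffI)
    fix w assume "w \<in> {ys @ xs | ys xs. length ys = Suc m \<and> xs \<in> A}"
    then obtain ys xs where w: "w = ys @ xs" "length ys = Suc m" "xs \<in> A" by blast
    then obtain y ys' where "ys = y # ys'" by (cases ys) auto
    then show "w \<in> {y # zs | zs y. zs \<in> {ys @ xs | ys xs. length ys = m \<and> xs \<in> A}}"
      using w by auto
  next
    fix w assume "w \<in> {y # zs | zs y. zs \<in> {ys @ xs | ys xs. length ys = m \<and> xs \<in> A}}"
    then obtain y ys xs where w: "w = y # ys @ xs" "length ys = m" "xs \<in> A" by blast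
    then show "w \<in> {ys @ xs | ys xs. length ys = Suc m \<and> xs \<in> A}"
      by (intro CollectI exI[of _ "y # ys"] exI[of _ xs]) auto
  qed
  then show ?case using D_cons[OF Suc.IH[OF Suc.prems]] by simp
qed

lemma D_suffix: "A \<in> D j \<Longrightarrow> {q @ zs | q zs. q \<in> A \<and> length zs = m} \<in> D (j + m)"
proof (induction m)
  case 0
  then show ?case by simp
next
  case (Suc m)
  have "{q @ zs | q zs. q \<in> A \<and> length zs = Suc m}
      = {xs @ [y] | xs y. xs \<in> {q @ zs | q zs. q \<in> A \<and> length zs = m}}"
  proof (intro set_eqI iffI)
    fix w assume "w \<in> {q @ zs | q zs. q \<in> A \<and> length zs = Suc m}"
    then obtain q zs where w: "w = q @ zs" "q \<in> A" "length zs = Suc m" by blast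
    then obtain y zs' where "zs = zs' @ [y]" by (cases zs rule: rev_cases) auto
    then show "w \<in> {xs @ [y] | xs y. xs \<in> {q @ zs | q zs. q \<in> A \<and> length zs = m}}"
      using w by auto
  next
    fix w assume "w \<in> {xs @ [y] | xs y. xs \<in> {q @ zs | q zs. q \<in> A \<and> length zs = m}}"
    then obtain y q zs where w: "w = (q @ zs) @ [y]" "q \<in> A" "length zs = m" by blast
    then show "w \<in> {q @ zs | q zs. q \<in> A \<and> length zs = Suc m}"
      by (intro CollectI exI[of _ q] exI[of _ "zs @ [y]"]) auto
  qed
  then show ?case using D_snoc[OF Suc.IH[OF Suc.prems]] by simp
qed

lemma D_take: "A \<in> D (m + k) \<Longrightarrow> take m ` A \<in> D m"
proof (induction k arbitrary: A)
  case 0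
  then have "take m ` A = A" using D_len by force
  then show ?case using 0 by simp
next
  case (Suc k)
  then have "butlast ` A \<in> D (m + k)" using D_butlast by simp
  then have "take m ` butlast ` A \<in> D m" by (rule Suc.IH)
  moreover have "take m ` butlast ` A = take m ` A"
  proof -
    have "take m (butlast a) = take m a" if "a \<in> A" for a
      using D_len[OF Suc.prems that] by (simp add: butlast_conv_take)
    then show ?thesis by (auto simp: image_image)
  qed
  ultimately show ?case by simp
qed

lemma D_diags: "\<forall>(i,j)\<in>set ps. i < N \<and> j < N \<Longrightarrow> {zs \<in> Mpow N. \<forall>(i,j)\<in>set ps. zs ! i = zs ! j} \<in> D N"
proof (induction ps)
  case Nil
  then show ?case using D_Mpow by (simp add: Mpow_def)
next
  case (Cons p ps)
  obtain i j where p: "p = (i, j)" by force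
  have eq: "{zs \<in> Mpow N. \<forall>(i,j)\<in>set (p # ps). zs ! i = zs ! j}
     = {zs \<in> Mpow N. \<forall>(i,j)\<in>set ps. zs ! i = zs ! j} \<inter> {zs \<in> Mpow N. zs ! i = zs ! j}"
    using p by auto
  have "{zs \<in> Mpow N. \<forall>(i,j)\<in>set ps. zs ! i = zs ! j} \<inter> {zs \<in> Mpow N. zs ! i = zs ! j} \<in> D N"
    using Cons p by (intro D_Int D_diag) auto
  then show ?case unfolding eq .
qed

lemma D_reindex:
  assumes A: "A \<in> D (length vs)" and vs: "\<forall>i\<in>set vs. i < m"
  shows "{xs \<in> Mpow m. map (nth xs) vs \<in> A} \<in> D m"
proof -
  let ?k = "length vs"
  let ?B1 = "{ys @ xs | ys xs. length ys = m \<and> xs \<in> A}"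
  let ?ps = "zip [m..<m + ?k] vs"
  let ?B2 = "{zs \<in> Mpow (m + ?k). \<forall>(i,j)\<in>set ?ps. zs ! i = zs ! j}"
  have B1: "?B1 \<in> D (m + ?k)" using D_prefix[OF A] .
  have B2: "?B2 \<in> D (m + ?k)"
    apply (rule D_diags)
    using vs by (auto simp: set_zip) (meson nth_mem trans_less_add1)
  have "take m ` (?B1 \<inter> ?B2) \<in> D m" using D_take[OF D_Int[OF B1 B2]] .
  moreover have "take m ` (?B1 \<inter> ?B2) = {xs \<in> Mpow m. map (nth xs) vs \<in> A}"
  proof
    show "take m ` (?B1 \<inter> ?B2) \<subseteq> {xs \<in> Mpow m. map (nth xs) vs \<in> A}"
    proof
      fix w assume "w \<in> take m ` (?B1 \<inter> ?B2)"
      then obtain ys xs where w: "w = ys" and ys: "length ys = m" and xs: "xs \<in> A"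
        and d: "\<forall>(i,j)\<in>set ?ps. (ys @ xs) ! i = (ys @ xs) ! j"
        by auto
      have lx: "length xs = ?k" using D_len[OF A xs] .
      have "map (nth ys) vs = xs"
      proof (rule nth_equalityI)
        show "length (map (nth ys) vs) = length xs" using lx by simp
        fix l assume "l < length (map (nth ys) vs)"
        then have l: "l < ?k" by simp
        have "(m + l, vs ! l) \<in> set ?ps" using l by (auto simp: set_zip intro!: exI[of _ l])
        then have "(ys @ xs) ! (m + l) = (ys @ xs) ! (vs ! l)" using d by auto
        moreover have "vs ! l < m" using vs l by auto
        ultimately show "map (nth ys) vs ! l = xs ! l" using ys l by (simp add: nth_append)
      qed
      then show "w \<in> {xs \<in> Mpow m. map (nth xs) vs \<in> A}" using w ys xs by simp
    qed
  next
    show "{xs \<in> Mpow m. map (nth xs) vs \<in> A} \<subseteq> take m ` (?B1 \<inter> ?B2)"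
    proof
      fix ys assume "ys \<in> {xs \<in> Mpow m. map (nth xs) vs \<in> A}"
      then have ys: "length ys = m" and a: "map (nth ys) vs \<in> A" by auto
      let ?zs = "ys @ map (nth ys) vs"
      have "?zs \<in> ?B1" using ys a by blast
      moreover have "?zs \<in> ?B2"
      proof -
        have "?zs ! i = ?zs ! j" if "(i, j) \<in> set ?ps" for i j
        proof -
          from that obtain l where l: "l < ?k" and i: "i = m + l" and j: "j = vs ! l"
            by (auto simp: set_zip)
          have "vs ! l < m" using vs l by auto
          then show ?thesis using i j l ys by (simp add: nth_append)
        qed
        then show ?thesis using ys by auto
      qed
      ultimately show "ys \<in> take m ` (?B1 \<inter> ?B2)" using ys by (auto intro!: image_eqI[where x = ?zs])
    qed
  qed
  ultimately show ?thesis by simp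
qed

lemma D_single: "{cs} \<in> D (length cs)"
proof (induction cs)
  case Nil
  have "{[]} = Mpow 0" by (auto simp: Mpow_def)
  then have "{[]} \<in> D 0" using D_Mpow by metis
  then show ?case by simp
next
  case (Cons c cs)
  have "{c # cs} = {y # xs | xs y. xs \<in> {cs}} \<inter> {xs \<in> Mpow (Suc (length cs)). map (nth xs) [0] \<in> {[c]}}"
    by auto
  moreover have "{xs \<in> Mpow (Suc (length cs)). map (nth xs) [0] \<in> {[c]}} \<in> D (Suc (length cs))"
    by (rule D_reindex) (auto simp: D_const[unfolded One_nat_def])
  ultimately show ?case using D_cons[OF Cons.IH] by (simp add: D_Int)
qed

end

context dstruct
begin

inductive dpred :: "((nat \<Rightarrow> 'a) \<Rightarrow> bool) \<Rightarrow> bool" where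
  atom: "A \<in> D (length vs) \<Longrightarrow> dpred (\<lambda>v. map v vs \<in> A)"
| neg: "dpred P \<Longrightarrow> dpred (\<lambda>v. \<not> P v)"
| conj: "dpred P \<Longrightarrow> dpred Q \<Longrightarrow> dpred (\<lambda>v. P v \<and> Q v)"
| ex: "dpred P \<Longrightarrow> dpred (\<lambda>v. \<exists>a. P (vcons a v))"

lemma dpred_set: "dpred P \<Longrightarrow> {xs \<in> Mpow n. P (val n xs v)} \<in> D n"
proof (induction arbitrary: n v rule: dpred.induct)
  case (atom A vs)
  define K where "K = Suc (sum_list vs)"
  have vsK: "\<forall>i\<in>set vs. i < n + K"
    unfolding K_def using member_le_sum_list by fastforce
  define cs where "cs = map v [0..<K]"
  let ?T = "{zs \<in> Mpow (n + K). map (nth zs) vs \<in> A}"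
  let ?U = "{ys @ xs | ys xs. length ys = n \<and> xs \<in> {cs}}"
  have T: "?T \<in> D (n + K)" using D_reindex[OF atom vsK] .
  have U: "?U \<in> D (n + K)" using D_prefix[OF D_single[of cs]] by (simp add: cs_def)
  have "take n ` (?T \<inter> ?U) \<in> D n" using D_take[OF D_Int[OF T U]] .
  moreover have "take n ` (?T \<inter> ?U) = {xs \<in> Mpow n. map (val n xs v) vs \<in> A}"
  proof -
    have key: "map (nth (ys @ cs)) vs = map (val n ys v) vs" if "length ys = n" for ys
    proof (rule map_cong[OF refl])
      fix i assume "i \<in> set vs"
      then have "i < n + K" using vsK by auto
      then show "(ys @ cs) ! i = val n ys v i"
        using that by (auto simp: val_def nth_append cs_def)
    qed
    show ?thesis
    proof (intro set_eqI iffI)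
      fix w assume "w \<in> take n ` (?T \<inter> ?U)"
      then obtain ys where "ys @ cs \<in> ?T" "length ys = n" "w = ys" by auto
      then show "w \<in> {xs \<in> Mpow n. map (val n xs v) vs \<in> A}" using key by auto
    next
      fix w assume w: "w \<in> {xs \<in> Mpow n. map (val n xs v) vs \<in> A}"
      then have lw: "length w = n" and a: "map (val n w v) vs \<in> A" by auto
      have "map (nth (w @ cs)) vs \<in> A" using key[OF lw] a by metis
      then have "w @ cs \<in> ?T \<inter> ?U" using lw by (auto simp: cs_def)
      then show "w \<in> take n ` (?T \<inter> ?U)" using w by (auto intro!: image_eqI[where x="w @ cs"])
    qed
  qed
  ultimately show ?case by simp
next
  case (neg P)
  have "{xs \<in> Mpow n. \<not> P (val n xs v)} = Mpow n - {xs \<in> Mpow n. P (val n xs v)}" by auto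
  then show ?case using D_diff[OF D_Mpow neg.IH] by simp
next
  case (conj P Q)
  have "{xs \<in> Mpow n. P (val n xs v) \<and> Q (val n xs v)}
     = {xs \<in> Mpow n. P (val n xs v)} \<inter> {xs \<in> Mpow n. Q (val n xs v)}" by auto
  then show ?case using D_Int[OF conj.IH] by simp
next
  case (ex P)
  let ?S = "{zs \<in> Mpow (Suc n). P (val (Suc n) zs v)}"
  have S: "?S \<in> D (Suc n)" using ex.IH .
  let ?R = "{zs \<in> Mpow (Suc n). map (nth zs) (n # [0..<n]) \<in> ?S}"
  have R: "?R \<in> D (Suc n)" by (rule D_reindex) (use S in auto)
  have "butlast ` ?R = {xs \<in> Mpow n. \<exists>a. P (vcons a (val n xs v))}"
  proof (intro set_eqI iffI)
    fix w assume "w \<in> butlast ` ?R"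
    then obtain zs where zs: "zs \<in> ?R" "w = butlast zs" by auto
    then have lz: "length zs = Suc n" by auto
    then obtain ys a where zsd: "zs = ys @ [a]" by (cases zs rule: rev_cases) auto
    then have ly: "length ys = n" using lz by simp
    have "map (nth zs) (n # [0..<n]) = a # ys"
      using zsd ly by (auto simp: nth_append intro!: nth_equalityI)
    then have "P (val (Suc n) (a # ys) v)" using zs by auto
    then show "w \<in> {xs \<in> Mpow n. \<exists>a. P (vcons a (val n xs v))}"
      using zs zsd ly vcons_val[OF ly] by auto
  next
    fix w assume "w \<in> {xs \<in> Mpow n. \<exists>a. P (vcons a (val n xs v))}"
    then have lw: "length w = n" and "\<exists>a. P (vcons a (val n w v))" by auto
    then obtain a where "P (vcons a (val n w v))" by blast
    then have p: "P (val (Suc n) (a # w) v)" using vcons_val[OF lw] by simp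
    have "map (nth (w @ [a])) (n # [0..<n]) = a # w"
      using lw by (auto simp: nth_append intro!: nth_equalityI)
    then have "w @ [a] \<in> ?R" using lw p by auto
    then show "w \<in> butlast ` ?R" by (auto intro!: image_eqI[where x="w @ [a]"])
  qed
  then show ?case using D_butlast[OF R] by simp
qed

lemma dpred_cong: assumes "dpred P" "\<And>v. P v = Q v" shows "dpred Q"
proof -
  have "P = Q" by (rule ext) (rule assms(2))
  then show ?thesis using assms(1) by simp
qed

definition lift :: "(nat \<Rightarrow> nat) \<Rightarrow> nat \<Rightarrow> nat" where
  "lift f = (\<lambda>i. case i of 0 \<Rightarrow> 0 | Suc j \<Rightarrow> Suc (f j))"

lemma dpred_subst: "dpred P \<Longrightarrow> dpred (\<lambda>v. P (\<lambda>i. v (f i)))"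
proof (induction arbitrary: f rule: dpred.induct)
  case (atom A vs)
  have "dpred (\<lambda>v. map v (map f vs) \<in> A)" using atom by (intro dpred.atom) simp
  then show ?case by (rule dpred_cong) (simp add: comp_def)
next
  case (neg P)
  show ?case using dpred.neg[OF neg.IH] .
next
  case (conj P Q)
  show ?case using dpred.conj[OF conj.IH(1) conj.IH(2)] .
next
  case (ex P)
  have "dpred (\<lambda>w. P (\<lambda>i. w (lift f i)))" using ex.IH .
  then have "dpred (\<lambda>v. \<exists>a. P (\<lambda>i. vcons a v (lift f i)))" by (rule dpred.ex)
  then show ?case
  proof (rule dpred_cong)
    fix v :: "nat \<Rightarrow> 'a"
    have "(\<lambda>i. vcons a v (lift f i)) = vcons a (\<lambda>i. v (f i))" for a :: 'a
      by (auto simp: lift_def vcons_def fun_eq_iff split: nat.split)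
    then show "(\<exists>a. P (\<lambda>i. vcons a v (lift f i))) = (\<exists>a. P (vcons a (\<lambda>i. v (f i))))" by simp
  qed
qed

lemma dpred_true: "dpred (\<lambda>v. True)"
proof -
  have "dpred (\<lambda>v. map v [] \<in> Mpow 0)" using D_Mpow by (intro dpred.atom) simp
  then show ?thesis by (rule dpred_cong) simp
qed

lemma dpred_false: "dpred (\<lambda>v. False)"
  using dpred.neg[OF dpred_true] by simp

lemma dpred_const: "dpred (\<lambda>v. b)"
  using dpred_true dpred_false by (cases b) auto

lemma dpred_neg: "dpred P \<Longrightarrow> dpred (\<lambda>v. \<not> P v)" by (rule dpred.neg)
lemma dpred_conj: "dpred P \<Longrightarrow> dpred Q \<Longrightarrow> dpred (\<lambda>v. P v \<and> Q v)" by (rule dpred.conj)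
lemma dpred_disj: assumes "dpred P" "dpred Q" shows "dpred (\<lambda>v. P v \<or> Q v)"
  using dpred.neg[OF dpred.conj[OF dpred.neg[OF assms(1)] dpred.neg[OF assms(2)]]]
  by (rule dpred_cong) simp
lemma dpred_imp: assumes "dpred P" "dpred Q" shows "dpred (\<lambda>v. P v \<longrightarrow> Q v)"
  using dpred.neg[OF dpred.conj[OF assms(1) dpred.neg[OF assms(2)]]]
  by (rule dpred_cong) simp
lemma dpred_iff: assumes "dpred P" "dpred Q" shows "dpred (\<lambda>v. P v \<longleftrightarrow> Q v)"
  using dpred.conj[OF dpred_imp[OF assms] dpred_imp[OF assms(2,1)]] by (rule dpred_cong) blast
lemma dpred_ex: assumes "dpred (\<lambda>v. Q (v 0) (\<lambda>i. v (Suc i)))" shows "dpred (\<lambda>v. \<exists>a. Q a v)"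
  using dpred.ex[OF assms] by (rule dpred_cong) simp
lemma dpred_all: assumes "dpred (\<lambda>v. Q (v 0) (\<lambda>i. v (Suc i)))" shows "dpred (\<lambda>v. \<forall>a. Q a v)"
proof -
  have "dpred (\<lambda>v. \<not> Q (v 0) (\<lambda>i. v (Suc i)))" using dpred.neg[OF assms] .
  then have "dpred (\<lambda>v. \<exists>a. \<not> Q a v)" by (rule dpred_ex)
  then show ?thesis by (rule dpred_cong[OF dpred.neg]) simp
qed

lemma dpred_eq_var: "dpred (\<lambda>v. v i = v j)"
proof -
  have "{xs \<in> Mpow 2. xs ! 0 = xs ! 1} \<in> D (length [i, j])"
    using D_diag[of 0 2 1] by (simp add: numeral_2_eq_2)
  then have "dpred (\<lambda>v. map v [i, j] \<in> {xs \<in> Mpow 2. xs ! 0 = xs ! 1})"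
    by (rule dpred.atom)
  then show ?thesis by (rule dpred_cong) simp
qed

lemma dpred_lt_var: "dpred (\<lambda>v. v i < v j)"
proof -
  have "dpred (\<lambda>v. map v [i, j] \<in> {[x, y] | x y. x < y})"
    by (rule dpred.atom) (use D_lt in \<open>simp add: numeral_2_eq_2\<close>)
  then show ?thesis by (rule dpred_cong) simp
qed

lemma dpred_plus_var: "dpred (\<lambda>v. v k = v i + v j)"
proof -
  have "dpred (\<lambda>v. map v [i, j, k] \<in> {[x, y, z] | x y z. z = x + y})"
    by (rule dpred.atom) (use D_plus in \<open>simp add: numeral_3_eq_3\<close>)
  then show ?thesis by (rule dpred_cong) simp
qed

lemma dpred_const_var: "dpred (\<lambda>v. v i = c)"
proof -
  have "dpred (\<lambda>v. map v [i] \<in> {[c]})"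
    by (rule dpred.atom) (simp add: D_const[unfolded One_nat_def])
  then show ?thesis by (rule dpred_cong) simp
qed

end

context dstruct
begin

definition dterm :: "((nat \<Rightarrow> 'a) \<Rightarrow> 'a) \<Rightarrow> bool" where
  "dterm t \<longleftrightarrow> dpred (\<lambda>v. v 0 = t (\<lambda>i. v (Suc i)))"

lemma dterm_eq: assumes "dterm t" shows "dpred (\<lambda>v. v i = t (\<lambda>j. v (f j)))"
proof -
  have "dpred (\<lambda>v. v 0 = t (\<lambda>i. v (Suc i)))" using assms by (simp add: dterm_def)
  from dpred_subst[OF this, of "\<lambda>j. case j of 0 \<Rightarrow> i | Suc j' \<Rightarrow> f j'"]
  show ?thesis by (rule dpred_cong) simp
qed

lemma dterm_cong: "dterm t \<Longrightarrow> (\<And>v. t v = s v) \<Longrightarrow> dterm s"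
  unfolding dterm_def by (erule dpred_cong) simp

lemma dterm_var: "dterm (\<lambda>v. v i)"
  unfolding dterm_def by (rule dpred_eq_var)

lemma dterm_constant: "dterm (\<lambda>v. c)"
  unfolding dterm_def by (rule dpred_const_var)

lemma dterm_plus: assumes "dterm t1" "dterm t2" shows "dterm (\<lambda>v. t1 v + t2 v)"
proof -
  have "dpred (\<lambda>v. \<exists>a. a = t1 (\<lambda>i. v (Suc i)) \<and> (\<exists>b. b = t2 (\<lambda>i. v (Suc i)) \<and> v 0 = a + b))"
    by (intro dpred_ex dpred_conj dterm_eq[OF assms(1)] dterm_eq[OF assms(2)] dpred_plus_var)
  then show ?thesis unfolding dterm_def by (rule dpred_cong) blast
qed

lemma dterm_uminus: assumes "dterm t" shows "dterm (\<lambda>v. - t v)"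
proof -
  have "dpred (\<lambda>v. \<exists>a. a = t (\<lambda>i. v (Suc i)) \<and> (\<exists>z. z = 0 \<and> z = v 0 + a))"
    by (intro dpred_ex dpred_conj dterm_eq[OF assms(1)] dpred_const_var dpred_plus_var)
  then show ?thesis unfolding dterm_def
  proof (rule dpred_cong)
    fix v :: "nat \<Rightarrow> 'a"
    show "(\<exists>a. a = t (\<lambda>i. v (Suc i)) \<and> (\<exists>z. z = 0 \<and> z = v 0 + a)) = (v 0 = - t (\<lambda>i. v (Suc i)))"
      by (metis eq_neg_iff_add_eq_0)
  qed
qed

lemma dterm_minus: assumes "dterm t1" "dterm t2" shows "dterm (\<lambda>v. t1 v - t2 v)"
  using dterm_plus[OF assms(1) dterm_uminus[OF assms(2)]] by (rule dterm_cong) simp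

lemma dpred_lt: assumes "dterm t1" "dterm t2" shows "dpred (\<lambda>v. t1 v < t2 v)"
proof -
  have "dpred (\<lambda>v. \<exists>a. a = t1 v \<and> (\<exists>b. b = t2 v \<and> a < b))"
    by (intro dpred_ex dpred_conj dterm_eq[OF assms(1)] dterm_eq[OF assms(2)] dpred_lt_var)
  then show ?thesis by (rule dpred_cong) blast
qed

lemma dpred_le: assumes "dterm t1" "dterm t2" shows "dpred (\<lambda>v. t1 v \<le> t2 v)"
  using dpred.neg[OF dpred_lt[OF assms(2,1)]] by (rule dpred_cong) (simp add: not_less)

lemma dpred_eq: assumes "dterm t1" "dterm t2" shows "dpred (\<lambda>v. t1 v = t2 v)"
proof -
  have "dpred (\<lambda>v. \<exists>a. a = t1 v \<and> (\<exists>b. b = t2 v \<and> a = b))"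
    by (intro dpred_ex dpred_conj dterm_eq[OF assms(1)] dterm_eq[OF assms(2)] dpred_eq_var)
  then show ?thesis by (rule dpred_cong) blast
qed

definition dlist :: "((nat \<Rightarrow> 'a) \<Rightarrow> 'a list) \<Rightarrow> bool" where
  "dlist L \<longleftrightarrow> (\<exists>k. (\<forall>v. length (L v) = k) \<and> dpred (\<lambda>v. map v [0..<k] = L (\<lambda>i. v (i + k))))"

lemma ex_list: "dpred (\<lambda>v. Q (map v [0..<k]) (\<lambda>i. v (i + k))) \<Longrightarrow> dpred (\<lambda>v. \<exists>ys. length ys = k \<and> Q ys v)"
proof (induction k arbitrary: Q)
  case 0
  then show ?case by (rule dpred_cong) simp
next
  case (Suc k)
  have "dpred (\<lambda>w. Q (w 0 # map (\<lambda>i. w (Suc i)) [0..<k]) (\<lambda>i. w (Suc (i + k))))"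
    using Suc.prems by (rule dpred_cong) (simp add: map_upt_Suc del: upt_Suc)
  then have "dpred (\<lambda>v. \<exists>a. Q (a # map v [0..<k]) (\<lambda>i. v (i + k)))"
    by (rule dpred_ex)
  then have "dpred (\<lambda>v. \<exists>ys. length ys = k \<and> (\<exists>a. Q (a # ys) v))"
    by (rule Suc.IH[where Q = "\<lambda>ys v. \<exists>a. Q (a # ys) v"])
  then show ?case
  proof (rule dpred_cong)
    fix v
    show "(\<exists>ys. length ys = k \<and> (\<exists>a. Q (a # ys) v)) = (\<exists>ys. length ys = Suc k \<and> Q ys v)"
      by (metis length_Suc_conv)
  qed
qed

lemma dpred_mem: assumes "dlist L" "A \<in> D m" shows "dpred (\<lambda>v. L v \<in> A)"
proof -
  obtain k where lk: "\<And>v. length (L v) = k" and hL: "dpred (\<lambda>v. map v [0..<k] = L (\<lambda>i. v (i + k)))"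
    using assms(1) unfolding dlist_def by blast
  show ?thesis
  proof (cases "k = m")
    case False
    have "L v \<notin> A" for v using D_len[OF assms(2)] lk False by metis
    then show ?thesis using dpred_false by (rule_tac dpred_cong) auto
  next
    case True
    have "dpred (\<lambda>v. map v [0..<k] = L (\<lambda>i. v (i + k)) \<and> map v [0..<k] \<in> A)"
      by (intro dpred_conj hL dpred.atom) (simp add: True assms(2))
    then have "dpred (\<lambda>v. \<exists>ys. length ys = k \<and> (ys = L v \<and> ys \<in> A))"
      by (rule ex_list[where Q = "\<lambda>ys v. ys = L v \<and> ys \<in> A"])
    then show ?thesis
    proof (rule dpred_cong)
      fix v show "(\<exists>ys. length ys = k \<and> ys = L v \<and> ys \<in> A) = (L v \<in> A)" using lk by metis
    qed
  qed
qed

lemma dlist_nil: "dlist (\<lambda>v. [])"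
  unfolding dlist_def by (rule exI[of _ 0]) (simp add: dpred_true)

lemma dlist_cons: assumes "dterm t" "dlist L" shows "dlist (\<lambda>v. t v # L v)"
proof -
  obtain k where lk: "\<And>v. length (L v) = k" and hL: "dpred (\<lambda>v. map v [0..<k] = L (\<lambda>i. v (i + k)))"
    using assms(2) unfolding dlist_def by blast
  have P1: "dpred (\<lambda>v. v 0 = t (\<lambda>j. v (j + Suc k)))" by (rule dterm_eq[OF assms(1)])
  have P2: "dpred (\<lambda>v. map (\<lambda>i. v (Suc i)) [0..<k] = L (\<lambda>i. v (Suc (i + k))))"
    using dpred_subst[OF hL, of Suc] by simp
  have "dpred (\<lambda>v. map v [0..<Suc k] = t (\<lambda>i. v (i + Suc k)) # L (\<lambda>i. v (i + Suc k)))"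
    using dpred_conj[OF P1 P2] by (rule dpred_cong) (simp add: map_upt_Suc del: upt_Suc)
  then show ?thesis unfolding dlist_def using lk by (intro exI[of _ "Suc k"]) simp
qed

lemma map_upt_shift: "map v [a..<a + b] = map (\<lambda>i. v (i + a)) [0..<b]"
  by (rule nth_equalityI) (auto simp: add.commute)

lemma dlist_append: assumes "dlist L1" "dlist L2" shows "dlist (\<lambda>v. L1 v @ L2 v)"
proof -
  obtain k1 where lk1: "\<And>v. length (L1 v) = k1" and h1: "dpred (\<lambda>v. map v [0..<k1] = L1 (\<lambda>i. v (i + k1)))"
    using assms(1) unfolding dlist_def by blast
  obtain k2 where lk2: "\<And>v. length (L2 v) = k2" and h2: "dpred (\<lambda>v. map v [0..<k2] = L2 (\<lambda>i. v (i + k2)))"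
    using assms(2) unfolding dlist_def by blast
  have P1: "dpred (\<lambda>v. map v [0..<k1] = L1 (\<lambda>i. v (i + (k1 + k2))))"
    using dpred_subst[OF h1, of "\<lambda>i. if i < k1 then i else i + k2"]
  proof (rule dpred_cong)
    fix v :: "nat \<Rightarrow> 'a"
    have m: "map (\<lambda>i. v (if i < k1 then i else i + k2)) [0..<k1] = map v [0..<k1]" by simp
    have m2: "(\<lambda>i. v (if i + k1 < k1 then i + k1 else i + k1 + k2)) = (\<lambda>i. v (i + (k1 + k2)))"
      by (simp add: add.assoc)
    show "(map (\<lambda>i. v (if i < k1 then i else i + k2)) [0..<k1] =
          L1 (\<lambda>i. v (if i + k1 < k1 then i + k1 else i + k1 + k2))) =
         (map v [0..<k1] = L1 (\<lambda>i. v (i + (k1 + k2))))" unfolding m m2 ..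
  qed
  have P2: "dpred (\<lambda>v. map v [k1..<k1 + k2] = L2 (\<lambda>i. v (i + (k1 + k2))))"
    using dpred_subst[OF h2, of "\<lambda>i. i + k1"]
    by (rule dpred_cong) (simp add: map_upt_shift add.commute add.left_commute)
  have "dpred (\<lambda>v. map v [0..<k1 + k2] = L1 (\<lambda>i. v (i + (k1 + k2))) @ L2 (\<lambda>i. v (i + (k1 + k2))))"
    using dpred_conj[OF P1 P2]
  proof (rule dpred_cong)
    fix v :: "nat \<Rightarrow> 'a"
    have "map v [0..<k1 + k2] = map v [0..<k1] @ map v [k1..<k1 + k2]"
      using upt_add_eq_append[of 0 k1 k2] by simp
    then show "(map v [0..<k1] = L1 (\<lambda>i. v (i + (k1 + k2))) \<and> map v [k1..<k1 + k2] = L2 (\<lambda>i. v (i + (k1 + k2)))) =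
         (map v [0..<k1 + k2] = L1 (\<lambda>i. v (i + (k1 + k2))) @ L2 (\<lambda>i. v (i + (k1 + k2))))"
      using append_eq_append_conv[of "map v [0..<k1]" "L1 (\<lambda>i. v (i + (k1 + k2)))"] lk1 by simp
  qed
  then show ?thesis unfolding dlist_def using lk1 lk2 by (intro exI[of _ "k1 + k2"]) simp
qed

lemma dlist_map: "dlist (\<lambda>v. map (\<lambda>i. v (f i)) xs)"
proof (induction xs)
  case Nil
  then show ?case using dlist_nil by simp
next
  case (Cons x xs)
  have "dlist (\<lambda>v. v (f x) # map (\<lambda>i. v (f i)) xs)" by (rule dlist_cons[OF dterm_var Cons.IH])
  then show ?case by simp
qed

lemma dlist_map': "dlist (\<lambda>v. map v xs)"
  using dlist_map[of "\<lambda>i. i" xs] by simp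

lemma dlist_constant: "dlist (\<lambda>v. cs)"
proof (induction cs)
  case Nil
  then show ?case using dlist_nil by simp
next
  case (Cons c cs)
  show ?case by (rule dlist_cons[OF dterm_constant Cons.IH])
qed

lemma dset1_dpred: assumes "dpred P" shows "dset1 D {a. P (vcons a v)}"
proof -
  have "{xs \<in> Mpow 1. P (val 1 xs v)} \<in> D 1" by (rule dpred_set[OF assms])
  moreover have "(\<lambda>y. [y]) ` {a. P (vcons a v)} = {xs \<in> Mpow 1. P (val 1 xs v)}"
  proof -
    have e: "val 1 [a] v = vcons a v" for a
      by (auto simp: val_def vcons_def fun_eq_iff split: nat.split)
    show ?thesis
    proof (intro set_eqI iffI)
      fix w assume "w \<in> (\<lambda>y. [y]) ` {a. P (vcons a v)}"
      then show "w \<in> {xs \<in> Mpow 1. P (val 1 xs v)}" using e by auto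
    next
      fix w assume w: "w \<in> {xs \<in> Mpow 1. P (val 1 xs v)}"
      then obtain a where "w = [a]" by (auto simp: length_Suc_conv)
      then show "w \<in> (\<lambda>y. [y]) ` {a. P (vcons a v)}" using w e by auto
    qed
  qed
  ultimately show ?thesis by (simp add: dset1_def)
qed

lemma dset1_fam: assumes "dpred (\<lambda>v. Q (v 0) (\<lambda>i. v (Suc i)))" shows "dset1 D {a. Q a v}"
  using dset1_dpred[OF assms, of v] by simp

lemmas dpred_intros = dpred_conj dpred_disj dpred_imp dpred_iff dpred_neg dpred_ex dpred_all
  dpred_const dpred_lt dpred_le dpred_eq dpred_mem
lemmas dterm_intros = dterm_var dterm_constant dterm_plus dterm_uminus dterm_minus
lemmas dlist_intros = dlist_nil dlist_cons dlist_append dlist_map dlist_map' dlist_constant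

end

definition isInf :: "('b::linorder \<Rightarrow> bool) \<Rightarrow> 'b \<Rightarrow> bool" where
  "isInf Z c \<longleftrightarrow> (\<forall>z. Z z \<longrightarrow> c \<le> z) \<and> (\<forall>b. (\<forall>z. Z z \<longrightarrow> b \<le> z) \<longrightarrow> b \<le> c)"

definition isSup :: "('b::linorder \<Rightarrow> bool) \<Rightarrow> 'b \<Rightarrow> bool" where
  "isSup Z s \<longleftrightarrow> (\<forall>z. Z z \<longrightarrow> z \<le> s) \<and> (\<forall>b. (\<forall>z. Z z \<longrightarrow> z \<le> b) \<longrightarrow> s \<le> b)"

definition pickR :: "'b::{linorder,group_add} \<Rightarrow> ('b \<Rightarrow> bool) \<Rightarrow> 'b \<Rightarrow> 'b \<Rightarrow> bool" where
  "pickR pc Z c y \<longleftrightarrow> (Z c \<and> y = c) \<or>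
      (\<not> Z c \<and> (\<exists>d. isSup (\<lambda>z. c < z \<and> z \<le> c + pc \<and> (\<forall>w. c < w \<and> w < z \<longrightarrow> Z w)) d \<and>
          (\<exists>m. isSup (\<lambda>x. x + x \<le> - c + d) m \<and> y = c + m)))"

definition pick :: "'b::{linorder,group_add} \<Rightarrow> ('b \<Rightarrow> bool) \<Rightarrow> 'b \<Rightarrow> bool" where
  "pick pc Z y \<longleftrightarrow> (\<exists>c. isInf Z c \<and> pickR pc Z c y)"

definition choose1 :: "'b::{linorder,group_add} \<Rightarrow> ('b \<Rightarrow> bool) \<Rightarrow> 'b \<Rightarrow> bool" where
  "choose1 pc Y y \<longleftrightarrow> ((\<exists>z. Y z \<and> 0 \<le> z) \<and> pick pc (\<lambda>z. Y z \<and> 0 \<le> z) y) \<or>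
     (\<not> (\<exists>z. Y z \<and> 0 \<le> z) \<and> pick pc (\<lambda>z. Y (- z)) (- y))"

lemma isInf_unique: "isInf Z c1 \<Longrightarrow> isInf Z c2 \<Longrightarrow> c1 = c2"
  unfolding isInf_def by (meson order.antisym)

lemma isSup_unique: "isSup Z c1 \<Longrightarrow> isSup Z c2 \<Longrightarrow> c1 = c2"
  unfolding isSup_def by (meson order.antisym)

lemma pickR_unique: assumes "pickR pc Z c y1" "pickR pc Z c y2" shows "y1 = y2"
proof (cases "Z c")
  case True
  then show ?thesis using assms unfolding pickR_def by simp
next
  case False
  from assms(1) False obtain d1 m1 where
    d1: "isSup (\<lambda>z. c < z \<and> z \<le> c + pc \<and> (\<forall>w. c < w \<and> w < z \<longrightarrow> Z w)) d1"
    and m1: "isSup (\<lambda>x. x + x \<le> - c + d1) m1" and y1: "y1 = c + m1"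
    unfolding pickR_def by blast
  from assms(2) False obtain d2 m2 where
    d2: "isSup (\<lambda>z. c < z \<and> z \<le> c + pc \<and> (\<forall>w. c < w \<and> w < z \<longrightarrow> Z w)) d2"
    and m2: "isSup (\<lambda>x. x + x \<le> - c + d2) m2" and y2: "y2 = c + m2"
    unfolding pickR_def by blast
  have "d1 = d2" using isSup_unique[OF d1 d2] .
  then have "m1 = m2" using isSup_unique[OF m1] m2 by simp
  then show ?thesis using y1 y2 by simp
qed

lemma pick_unique: assumes "pick pc Z y1" "pick pc Z y2" shows "y1 = y2"
proof -
  obtain c1 where c1: "isInf Z c1" "pickR pc Z c1 y1" using assms(1) unfolding pick_def by blast
  obtain c2 where c2: "isInf Z c2" "pickR pc Z c2 y2" using assms(2) unfolding pick_def by blast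
  have "c1 = c2" using isInf_unique[OF c1(1) c2(1)] .
  then show ?thesis using pickR_unique c1(2) c2(2) by simp
qed

lemma choose1_unique: assumes "choose1 pc Y y1" "choose1 pc Y y2" shows "y1 = y2"
proof (cases "\<exists>z. Y z \<and> 0 \<le> z")
  case True
  then show ?thesis using assms pick_unique unfolding choose1_def by blast
next
  case False
  then have "pick pc (\<lambda>z. Y (- z)) (- y1)" "pick pc (\<lambda>z. Y (- z)) (- y2)"
    using assms unfolding choose1_def by blast+
  then have "- y1 = - y2" by (rule pick_unique)
  then show ?thesis by simp
qed

lemma fin_lb:
  fixes c :: "'b::linorder"
  shows "finite S \<Longrightarrow> (\<forall>s\<in>S. c < s) \<Longrightarrow> c < u0 \<Longrightarrow> \<exists>u. c < u \<and> u \<le> u0 \<and> (\<forall>s\<in>S. u \<le> s)"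
proof (induction S rule: finite_induct)
  case empty
  then show ?case by auto
next
  case (insert s S)
  then obtain u where "c < u" "u \<le> u0" "\<forall>s\<in>S. u \<le> s" by auto
  then show ?case using insert.prems by (intro exI[of _ "min u s"]) (auto simp: min_le_iff_disj)
qed

context dstruct
begin

lemma addl: "x < y \<Longrightarrow> z + x < z + (y::'a)" using dog by (simp add: dense_ordered_group_def)
lemma addr: "x < y \<Longrightarrow> x + z < y + (z::'a)" using dog by (simp add: dense_ordered_group_def)
lemma dense: "x < y \<Longrightarrow> \<exists>z::'a. x < z \<and> z < y" using dog by (simp add: dense_ordered_group_def)
lemma no_top: "\<exists>y::'a. x < y" using dog by (simp add: dense_ordered_group_def)
lemma no_bot: "\<exists>y::'a. y < x" using dog by (simp add: dense_ordered_group_def)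

lemma addl_le: "x \<le> y \<Longrightarrow> z + x \<le> z + (y::'a)" by (metis addl order_le_less)
lemma addr_le: "x \<le> y \<Longrightarrow> x + z \<le> y + (z::'a)" by (metis addr order_le_less)

lemma inf_ex: assumes "dset1 D (Collect Z)" "Z z0" "\<forall>z. Z z \<longrightarrow> b \<le> z" shows "\<exists>c. isInf Z c"
  using dc assms unfolding definably_complete_def isInf_def by (metis empty_iff mem_Collect_eq)

lemma sup_ex: assumes "dset1 D (Collect Z)" "Z z0" "\<forall>z. Z z \<longrightarrow> z \<le> b" shows "\<exists>c. isSup Z c"
  using dc assms unfolding definably_complete_def isSup_def by (metis empty_iff mem_Collect_eq)

lemma lom_right:
  assumes dZ: "dset1 D Z" and cZ: "c \<notin> Z" and acc: "\<forall>u>c. \<exists>z\<in>Z. c < z \<and> z < u"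
  shows "\<exists>u>c. \<forall>w. c < w \<and> w < u \<longrightarrow> w \<in> Z"
proof -
  have H: "\<exists>l u. c \<in> oint l u \<and> (\<exists>P Q. finite P \<and> finite Q \<and>
      Z \<inter> oint l u = P \<union> (\<Union>(l', u')\<in>Q. oint l' u'))"
    using lom[unfolded locally_o_minimal_def, rule_format, OF dZ, of c] .
  then obtain l u P Q where cI: "c \<in> oint l u" and fin: "finite P" "finite Q"
    and eq: "Z \<inter> oint l u = P \<union> (\<Union>(l', u')\<in>Q. oint l' u')"
    by (elim exE conjE)
  obtain u0 where u0: "c < u0" "\<forall>w. c < w \<and> w < u0 \<longrightarrow> w \<in> oint l u"
  proof (cases u)
    case None
    obtain u1 where "c < u1" using no_top by blast
    moreover have "\<forall>w. c < w \<and> w < u1 \<longrightarrow> w \<in> oint l u"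
      using cI None by (cases l) (auto simp: oint_def intro: less_trans)
    ultimately show ?thesis using that by blast
  next
    case (Some d)
    have "\<forall>w. c < w \<and> w < d \<longrightarrow> w \<in> oint l u"
      using cI Some by (cases l) (auto simp: oint_def intro: less_trans)
    moreover have "c < d" using cI Some by (auto simp: oint_def split: option.splits)
    ultimately show ?thesis using that by blast
  qed
  have claim: "\<exists>q\<in>Q. \<forall>u>c. \<exists>z. z \<in> oint (fst q) (snd q) \<and> c < z \<and> z < u"
  proof (rule ccontr)
    assume "\<not> ?thesis"
    then have "\<forall>q\<in>Q. \<exists>u. c < u \<and> (\<forall>z. z \<in> oint (fst q) (snd q) \<longrightarrow> \<not> (c < z \<and> z < u))"
      by (simp add: not_less)
    from bchoice[OF this] obtain uf where
      uf: "\<forall>q\<in>Q. c < uf q \<and> (\<forall>z. z \<in> oint (fst q) (snd q) \<longrightarrow> \<not> (c < z \<and> z < uf q))"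
      by blast
    let ?S = "uf ` Q \<union> {p \<in> P. c < p}"
    have fS: "finite ?S" using fin by simp
    have pS: "\<forall>s\<in>?S. c < s" using uf by auto
    obtain U where U: "c < U" "U \<le> u0" "\<forall>s\<in>?S. U \<le> s"
      using fin_lb[OF fS pS u0(1)] by blast
    obtain z where z: "z \<in> Z" "c < z" "z < U" using acc U(1) by blast
    have "z < u0" using z(3) U(2) by (rule less_le_trans)
    then have "z \<in> oint l u" using u0(2) z(2) by blast
    then have "z \<in> Z \<inter> oint l u" using z(1) by blast
    then have "z \<in> P \<union> (\<Union>(l', u')\<in>Q. oint l' u')" unfolding eq .
    then show False
    proof
      assume "z \<in> P"
      then have "U \<le> z" using U(3) z(2) by auto
      then show False using z(3) by simp
    next
      assume "z \<in> (\<Union>(l', u')\<in>Q. oint l' u')"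
      then obtain q where q: "q \<in> Q" "z \<in> oint (fst q) (snd q)" by auto
      have "U \<le> uf q" using U(3) q(1) by auto
      then have "z < uf q" using z(3) by (metis less_le_trans)
      then show False using uf q z(2) by blast
    qed
  qed
  then obtain q where q: "q \<in> Q" and qc: "\<forall>u>c. \<exists>z. z \<in> oint (fst q) (snd q) \<and> c < z \<and> z < u"
    by blast
  obtain z0 where z0: "z0 \<in> oint (fst q) (snd q)" "c < z0" "z0 < u0" using qc u0(1) by blast
  have "\<forall>w. c < w \<and> w < z0 \<longrightarrow> w \<in> Z"
  proof (intro allI impI)
    fix w assume w: "c < w \<and> w < z0"
    have low: "case fst q of None \<Rightarrow> True | Some a \<Rightarrow> a < w"
    proof (cases "fst q")
      case None
      then show ?thesis by simp
    next
      case (Some a)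
      show ?thesis
      proof (rule ccontr)
        assume "\<not> ?thesis"
        then have "w \<le> a" using Some by auto
        then have "c < a" using w by auto
        then obtain z where "z \<in> oint (fst q) (snd q)" "z < a" using qc by blast
        then show False using Some by (auto simp: oint_def)
      qed
    qed
    have up: "case snd q of None \<Rightarrow> True | Some d \<Rightarrow> w < d"
      using z0(1) w by (auto simp: oint_def split: option.splits)
    have wq: "w \<in> oint (fst q) (snd q)" using low up by (simp add: oint_def)
    have "w \<in> (\<Union>(l', u')\<in>Q. oint l' u')"
      using q wq by (intro UN_I[of q]) (auto simp: case_prod_beta)
    moreover have "w \<in> oint l u" using u0(2) w z0(3) by auto
    ultimately show "w \<in> Z" using eq by blast
  qed
  then show ?thesis using z0(2) by blast
qed

lemma half_ex: assumes "0 < (g::'a)" shows "\<exists>e. 0 < e \<and> e + e \<le> g"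
proof -
  obtain e0 where e0: "0 < e0" "e0 < g" using dense[OF assms] by blast
  show ?thesis
  proof (cases "e0 + e0 \<le> g")
    case True
    then show ?thesis using e0 by blast
  next
    case False
    then have lt: "g < e0 + e0" by simp
    let ?e = "g + - e0"
    have "e0 + - e0 < g + - e0" using addr[OF e0(2), of "- e0"] .
    then have pos: "0 < ?e" by simp
    have "g + - e0 < e0 + e0 + - e0" using addr[OF lt, of "- e0"] .
    then have less: "?e < e0" by (simp add: add.assoc)
    have "?e + ?e < ?e + e0" using addl[OF less, of ?e] .
    then have "?e + ?e < g" by (simp add: add.assoc)
    then show ?thesis using pos by (intro exI[of _ ?e]) simp
  qed
qed

lemma half_bound: assumes e: "0 < e" and ee: "e + e \<le> (g::'a)"
  shows "g \<le> (- e + g) + (- e + g)" and "- e + g < g"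
proof -
  have "e + e + - e \<le> g + - e" using addr_le[OF ee, of "- e"] .
  then have "e \<le> g + - e" by (simp add: add.assoc)
  then have "e + g \<le> g + - e + g" using addr_le by blast
  then have "- e + (e + g) \<le> - e + (g + - e + g)" using addl_le by blast
  then show "g \<le> (- e + g) + (- e + g)" by (simp add: add.assoc del: add_uminus_conv_diff)
  have "- e + 0 < - e + e" using addl[OF e, of "- e"] .
  then have "- e < 0" by simp
  then have "- e + g < 0 + g" using addr by blast
  then show "- e + g < g" by simp
qed

lemma dset1_Collect_iff: "dset1 D (Collect Z) \<longleftrightarrow> (\<lambda>y. [y]) ` Collect Z \<in> D 1"
  by (simp add: dset1_def)

lemma sing_mem: "[w] \<in> (\<lambda>y. [y]) ` Collect Z \<longleftrightarrow> Z w" by auto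

lemma pick_ex:
  assumes dZ: "dset1 D (Collect Z)" and z0: "Z z0" and lb: "\<forall>z. Z z \<longrightarrow> b \<le> z" and pc: "0 < pc"
  shows "\<exists>y. pick pc Z y \<and> Z y"
proof -
  define ZZ where "ZZ = (\<lambda>y. [y]) ` Collect Z"
  have ZZ: "ZZ \<in> D 1" using dZ by (simp add: dset1_def ZZ_def)
  have ZZm: "[w] \<in> ZZ \<longleftrightarrow> Z w" for w by (auto simp: ZZ_def)
  obtain c where c: "isInf Z c" using inf_ex[OF dZ z0 lb] by blast
  show ?thesis
  proof (cases "Z c")
    case True
    then show ?thesis using c unfolding pick_def pickR_def by blast
  next
    case False
    have acc: "\<forall>u>c. \<exists>z\<in>Collect Z. c < z \<and> z < u"
    proof (intro allI impI)
      fix u assume "c < u"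
      show "\<exists>z\<in>Collect Z. c < z \<and> z < u"
      proof (rule ccontr)
        assume "\<not> ?thesis"
        then have "\<forall>z. Z z \<longrightarrow> u \<le> z"
          using c False unfolding isInf_def by (metis le_less mem_Collect_eq not_le)
        then have "u \<le> c" using c unfolding isInf_def by blast
        then show False using \<open>c < u\<close> by simp
      qed
    qed
    obtain u where u: "c < u" "\<forall>w. c < w \<and> w < u \<longrightarrow> Z w"
      using lom_right[OF dZ _ acc] False by auto
    let ?W = "\<lambda>z. c < z \<and> z \<le> c + pc \<and> (\<forall>w. c < w \<and> w < z \<longrightarrow> Z w)"
    have "dpred (\<lambda>v. c < v 0 \<and> v 0 \<le> c + pc \<and> (\<forall>w. c < w \<and> w < v 0 \<longrightarrow> [w] \<in> ZZ))"
      by (intro dpred_intros dterm_intros dlist_intros) (rule ZZ)+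
    then have "dset1 D {a. c < a \<and> a \<le> c + pc \<and> (\<forall>w. c < w \<and> w < a \<longrightarrow> [w] \<in> ZZ)}"
      by (rule dset1_fam)
    then have dW: "dset1 D (Collect ?W)" by (simp add: ZZm)
    have cpc: "c < c + pc" using addl[OF pc, of c] by simp
    let ?z1 = "min u (c + pc)"
    have z1: "?W ?z1" using u cpc by auto
    have "\<forall>z. ?W z \<longrightarrow> z \<le> c + pc" by auto
    then obtain d where d: "isSup ?W d" using sup_ex[OF dW z1] by blast
    have cd: "c < d" using d z1 unfolding isSup_def by (meson less_le_trans)
    have cdZ: "Z w" if "c < w" "w < d" for w
    proof -
      have "\<exists>z. ?W z \<and> w < z"
      proof (rule ccontr)
        assume "\<not> ?thesis"
        then have "\<forall>z. ?W z \<longrightarrow> z \<le> w" by (meson not_le)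
        then have "d \<le> w" using d unfolding isSup_def by blast
        then show False using that by simp
      qed
      then show ?thesis using that by blast
    qed
    define g where "g = - c + d"
    have gpos: "0 < g" using addl[OF cd, of "- c"] by (simp add: g_def)
    let ?M = "\<lambda>x. x + x \<le> g"
    have "dpred (\<lambda>v. v 0 + v 0 \<le> g)"
      by (intro dpred_intros dterm_intros)
    then have dM: "dset1 D (Collect ?M)" using dset1_fam[where Q = "\<lambda>a v. a + a \<le> g"] by simp
    have M0: "?M 0" using gpos by simp
    obtain e where e: "0 < e" "e + e \<le> g" using half_ex[OF gpos] by blast
    have hb: "g \<le> (- e + g) + (- e + g)" "- e + g < g" using half_bound[OF e] by auto
    have Mb: "\<forall>x. ?M x \<longrightarrow> x \<le> - e + g"
    proof (intro allI impI)
      fix x assume x: "?M x"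
      show "x \<le> - e + g"
      proof (rule ccontr)
        assume "\<not> ?thesis"
        then have xl: "- e + g < x" by simp
        have "x + (- e + g) < x + x" using addl[OF xl] .
        moreover have "(- e + g) + (- e + g) < x + (- e + g)" using addr[OF xl] .
        ultimately have "g < x + x" using hb(1) by (meson le_less_trans less_trans)
        then show False using x by simp
      qed
    qed
    obtain m where m: "isSup ?M m" using sup_ex[OF dM M0 Mb] by blast
    have m0: "e \<le> m" using m e unfolding isSup_def by blast
    have mg: "m < g" using m Mb hb(2) unfolding isSup_def by (meson le_less_trans)
    have y1: "c < c + m" using addl[of 0 m c] m0 e(1) by simp
    have "c + m < c + g" using addl[OF mg] .
    then have y2: "c + m < d" by (simp add: g_def add.assoc[symmetric])
    have "Z (c + m)" using cdZ[OF y1 y2] .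
    moreover have "pick pc Z (c + m)"
      unfolding pick_def pickR_def using c False d m by (auto simp: g_def)
    ultimately show ?thesis by blast
  qed
qed

lemma pick_empty: "pick (pc::'a) Z y \<Longrightarrow> \<exists>z. Z z"
proof (rule ccontr)
  assume p: "pick pc Z y" and n: "\<not> (\<exists>z. Z z)"
  then obtain c where "isInf Z c" unfolding pick_def by blast
  then have "\<forall>b. b \<le> c" using n unfolding isInf_def by blast
  then show False using no_top[of c] by (meson not_le)
qed

lemma choose1_ex:
  assumes dY: "dset1 D (Collect Y)" and y0: "Y y0" and pc: "0 < pc"
  shows "\<exists>y. choose1 pc Y y \<and> Y y"
proof -
  define YY where "YY = (\<lambda>y. [y]) ` Collect Y"
  have YY: "YY \<in> D 1" using dY by (simp add: dset1_def YY_def)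
  have YYm: "[w] \<in> YY \<longleftrightarrow> Y w" for w by (auto simp: YY_def)
  show ?thesis
  proof (cases "\<exists>z. Y z \<and> 0 \<le> z")
    case True
    then obtain z1 where z1: "Y z1 \<and> 0 \<le> z1" by blast
    have "dpred (\<lambda>v. [v 0] \<in> YY \<and> 0 \<le> v 0)"
      by (intro dpred_intros dterm_intros dlist_intros) (rule YY)+
    then have "dset1 D (Collect (\<lambda>z. Y z \<and> 0 \<le> z))"
      using dset1_fam[where Q = "\<lambda>a v. [a] \<in> YY \<and> 0 \<le> a"] by (simp add: YYm)
    from pick_ex[OF this z1 _ pc, of 0] obtain y where "pick pc (\<lambda>z. Y z \<and> 0 \<le> z) y" "Y y"
      by auto
    then show ?thesis using True unfolding choose1_def by blast
  next
    case False
    have "dpred (\<lambda>v. [- v 0] \<in> YY)"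
      by (intro dpred_intros dterm_intros dlist_intros) (rule YY)+
    then have dZ: "dset1 D (Collect (\<lambda>z. Y (- z)))"
      using dset1_fam[where Q = "\<lambda>a v. [- a] \<in> YY"] by (simp add: YYm)
    have z0: "Y (- (- y0))" using y0 by simp
    have lb: "\<forall>z. Y (- z) \<longrightarrow> 0 \<le> z"
    proof (intro allI impI)
      fix z assume "Y (- z)"
      then have "- z < 0" using False by (meson not_le)
      then have "z + - z < z + 0" using addl by blast
      then show "0 \<le> z" by simp
    qed
    from pick_ex[OF dZ z0 lb pc] obtain y' where "pick pc (\<lambda>z. Y (- z)) y'" "Y (- y')" by blast
    then show ?thesis using False unfolding choose1_def by (intro exI[of _ "- y'"]) simp
  qed
qed

lemma choose1_nonempty: "choose1 (pc::'a) Y y \<Longrightarrow> \<exists>z. Y z"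
  unfolding choose1_def using pick_empty by blast

end

lemma val_nth: "i < n \<Longrightarrow> val n xs v i = xs ! i" by (simp add: val_def)


context dstruct
begin

lemma val_take: assumes "length xs = n" "k \<le> n" shows "map (val n xs v) [0..<k] = take k xs"
  using assms by (intro nth_equalityI) (auto simp: val_def)

lemma val_tl: assumes "length zs = Suc n" shows "map (\<lambda>i. val (Suc n) zs v (Suc i)) [0..<n] = tl zs"
  using assms by (intro nth_equalityI) (auto simp: val_def nth_tl)

lemma choice1:
  assumes F: "F \<in> D (Suc k)"
  shows "\<exists>h. (\<forall>p. length p = k \<longrightarrow> (\<exists>y. p @ [y] \<in> F) \<longrightarrow> p @ [h p] \<in> F) \<and>
     {p @ [h p] | p. length p = k \<and> (\<exists>y. p @ [y] \<in> F)} \<in> D (Suc k)"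
proof -
  obtain pc :: 'a where pc: "0 < pc" using no_top by blast
  define h where "h p = (THE y. choose1 pc (\<lambda>z. p @ [z] \<in> F) y)" for p
  have dY: "dset1 D (Collect (\<lambda>z. p @ [z] \<in> F))" for p
  proof -
    have "dpred (\<lambda>v. p @ [v 0] \<in> F)" by (intro dpred_intros dlist_intros dterm_intros) (rule F)+
    then show ?thesis using dset1_fam[where Q = "\<lambda>a v. p @ [a] \<in> F"] by simp
  qed
  have hp: "choose1 pc (\<lambda>z. p @ [z] \<in> F) (h p) \<and> p @ [h p] \<in> F" if nep: "\<exists>y. p @ [y] \<in> F" for p
  proof -
    obtain y0 where "p @ [y0] \<in> F" using nep by blast
    then obtain y where y: "choose1 pc (\<lambda>z. p @ [z] \<in> F) y" "p @ [y] \<in> F"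
      using choose1_ex[OF dY _ pc] by blast
    have "h p = y" unfolding h_def
      by (rule the_equality[where P = "choose1 pc (\<lambda>z. p @ [z] \<in> F)", OF y(1)]) (rule choose1_unique[OF _ y(1)])
    then show ?thesis using y by simp
  qed
  have "dpred (\<lambda>v. choose1 pc (\<lambda>z. map v [0..<k] @ [z] \<in> F) (v k))"
    unfolding choose1_def pick_def pickR_def isInf_def isSup_def
    by (intro dpred_intros dlist_intros dterm_intros) (rule F)+
  then have G: "{xs \<in> Mpow (Suc k). choose1 pc (\<lambda>z. map (val (Suc k) xs (\<lambda>_. 0)) [0..<k] @ [z] \<in> F)
        (val (Suc k) xs (\<lambda>_. 0) k)} \<in> D (Suc k)"
    by (rule dpred_set)
  have eq: "{xs \<in> Mpow (Suc k). choose1 pc (\<lambda>z. map (val (Suc k) xs (\<lambda>_. 0)) [0..<k] @ [z] \<in> F)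
        (val (Suc k) xs (\<lambda>_. 0) k)} = {p @ [h p] | p. length p = k \<and> (\<exists>y. p @ [y] \<in> F)}"
  proof (intro set_eqI iffI)
    fix xs assume "xs \<in> {xs \<in> Mpow (Suc k). choose1 pc (\<lambda>z. map (val (Suc k) xs (\<lambda>_. 0)) [0..<k] @ [z] \<in> F)
        (val (Suc k) xs (\<lambda>_. 0) k)}"
    then have lx: "length xs = Suc k" and ch: "choose1 pc (\<lambda>z. take k xs @ [z] \<in> F) (xs ! k)"
      by (auto simp: val_take val_nth)
    obtain p y where xs: "xs = p @ [y]" using lx by (cases xs rule: rev_cases) auto
    then have lp: "length p = k" using lx by simp
    have ch': "choose1 pc (\<lambda>z. p @ [z] \<in> F) y" using ch xs lp[symmetric] by simp
    then have ne: "\<exists>y. p @ [y] \<in> F" using choose1_nonempty by blast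
    then have "h p = y" using hp[OF ne] choose1_unique ch' by blast
    then show "xs \<in> {p @ [h p] | p. length p = k \<and> (\<exists>y. p @ [y] \<in> F)}" using xs lp ne by blast
  next
    fix xs assume "xs \<in> {p @ [h p] | p. length p = k \<and> (\<exists>y. p @ [y] \<in> F)}"
    then obtain p where xs: "xs = p @ [h p]" and lp: "length p = k" and ne: "\<exists>y. p @ [y] \<in> F" by blast
    have "choose1 pc (\<lambda>z. take k xs @ [z] \<in> F) (xs ! k)" using hp[OF ne] xs lp[symmetric] by simp
    then show "xs \<in> {xs \<in> Mpow (Suc k). choose1 pc (\<lambda>z. map (val (Suc k) xs (\<lambda>_. 0)) [0..<k] @ [z] \<in> F)
        (val (Suc k) xs (\<lambda>_. 0) k)}" using xs lp by (simp add: val_take val_nth del: append.simps)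
  qed
  show ?thesis using hp G eq by (intro exI[of _ h]) auto
qed


lemma choice:
  "F \<in> D (k + m) \<Longrightarrow> \<exists>g. (\<forall>p. length p = k \<longrightarrow> (\<exists>zs. p @ zs \<in> F) \<longrightarrow> p @ g p \<in> F) \<and>
     {p @ g p | p. length p = k \<and> (\<exists>zs. p @ zs \<in> F)} \<in> D (k + m)"
proof (induction m arbitrary: k F)
  case 0
  have "{p @ [] | p. length p = k \<and> (\<exists>zs. p @ zs \<in> F)} = F"
  proof (intro set_eqI iffI)
    fix x assume "x \<in> {p @ [] | p. length p = k \<and> (\<exists>zs. p @ zs \<in> F)}"
    then obtain zs where "length x = k" "x @ zs \<in> F" by auto
    moreover then have "length (x @ zs) = k" using D_len[OF 0[simplified]] by blast
    ultimately show "x \<in> F" by simp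
  next
    fix x assume "x \<in> F"
    moreover then have "length x = k" using D_len[OF 0[simplified]] by blast
    ultimately show "x \<in> {p @ [] | p. length p = k \<and> (\<exists>zs. p @ zs \<in> F)}"
      by (intro CollectI exI[of _ x]) (auto intro!: exI[of _ "[]"])
  qed
  then show ?case using 0 by (intro exI[of _ "\<lambda>p. []"]) auto
next
  case (Suc m)
  have FS: "F \<in> D (Suc k + m)" using Suc.prems by simp
  define F1 where "F1 = take (Suc k) ` F"
  have F1: "F1 \<in> D (Suc k)" unfolding F1_def by (rule D_take[OF FS])
  obtain h where h1: "\<forall>p. length p = k \<longrightarrow> (\<exists>y. p @ [y] \<in> F1) \<longrightarrow> p @ [h p] \<in> F1"
    and hD: "{p @ [h p] | p. length p = k \<and> (\<exists>y. p @ [y] \<in> F1)} \<in> D (Suc k)"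
    using choice1[OF F1] by blast
  define H where "H = {p @ [h p] | p. length p = k \<and> (\<exists>y. p @ [y] \<in> F1)}"
  define F2 where "F2 = F \<inter> {q @ zs | q zs. q \<in> H \<and> length zs = m}"
  have F2: "F2 \<in> D (Suc k + m)" unfolding F2_def H_def by (rule D_Int[OF FS D_suffix[OF hD]])
  obtain g' where g1: "\<forall>q. length q = Suc k \<longrightarrow> (\<exists>zs. q @ zs \<in> F2) \<longrightarrow> q @ g' q \<in> F2"
    and gD: "{q @ g' q | q. length q = Suc k \<and> (\<exists>zs. q @ zs \<in> F2)} \<in> D (Suc k + m)"
    using Suc.IH[OF F2] by blast
  define g where "g p = h p # g' (p @ [h p])" for p
  have key: "\<exists>zs. (p @ [h p]) @ zs \<in> F2" if lp: "length p = k" and ne: "\<exists>zs. p @ zs \<in> F" for p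
  proof -
    obtain zs where zs: "p @ zs \<in> F" using ne by blast
    have "length (p @ zs) = k + Suc m" using D_len[OF Suc.prems zs] .
    then have "length zs = Suc m" using lp by simp
    then obtain y zs' where zsd: "zs = y # zs'" by (cases zs) auto
    have "take (Suc k) (p @ zs) = p @ [y]" using lp zsd by simp
    then have "p @ [y] \<in> F1" using zs unfolding F1_def by (metis image_eqI)
    then have "p @ [h p] \<in> F1" using h1 lp by blast
    then obtain a where a: "a \<in> F" "take (Suc k) a = p @ [h p]" unfolding F1_def by (metis image_iff)
    have la: "length a = k + Suc m" using D_len[OF Suc.prems a(1)] .
    have ad: "a = (p @ [h p]) @ drop (Suc k) a" using a(2) by (metis append_take_drop_id)
    have "p @ [h p] \<in> H" unfolding H_def using lp \<open>p @ [y] \<in> F1\<close> by blast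
    moreover have "length (drop (Suc k) a) = m" using la by simp
    ultimately have "a \<in> F2" unfolding F2_def using a(1) ad by blast
    then show ?thesis using ad by metis
  qed
  have P: "\<forall>p. length p = k \<longrightarrow> (\<exists>zs. p @ zs \<in> F) \<longrightarrow> p @ g p \<in> F"
  proof (intro allI impI)
    fix p assume lp: "length p = k" and ne: "\<exists>zs. p @ zs \<in> F"
    have "length (p @ [h p]) = Suc k" using lp by simp
    then have "(p @ [h p]) @ g' (p @ [h p]) \<in> F2" using g1 key[OF lp ne] by blast
    then show "p @ g p \<in> F" unfolding F2_def g_def by simp
  qed
  have eq: "{p @ g p | p. length p = k \<and> (\<exists>zs. p @ zs \<in> F)}
      = {q @ g' q | q. length q = Suc k \<and> (\<exists>zs. q @ zs \<in> F2)}"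
  proof (intro set_eqI iffI)
    fix x assume "x \<in> {p @ g p | p. length p = k \<and> (\<exists>zs. p @ zs \<in> F)}"
    then obtain p where x: "x = p @ g p" and lp: "length p = k" and ne: "\<exists>zs. p @ zs \<in> F" by blast
    have "x = (p @ [h p]) @ g' (p @ [h p])" using x unfolding g_def by simp
    moreover have "length (p @ [h p]) = Suc k" using lp by simp
    ultimately show "x \<in> {q @ g' q | q. length q = Suc k \<and> (\<exists>zs. q @ zs \<in> F2)}"
      using key[OF lp ne] by blast
  next
    fix x assume "x \<in> {q @ g' q | q. length q = Suc k \<and> (\<exists>zs. q @ zs \<in> F2)}"
    then obtain q zs where x: "x = q @ g' q" and lq: "length q = Suc k" and qz: "q @ zs \<in> F2" by blast
    from qz obtain q' zs' where qq: "q @ zs = q' @ zs'" and q'H: "q' \<in> H" and "length zs' = m"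
      and qF: "q @ zs \<in> F" unfolding F2_def by blast
    have "length q' = Suc k" using q'H D_len[OF hD] unfolding H_def by blast
    then have "q = q'" using qq lq by (metis append_eq_append_conv)
    then obtain p y where q: "q = p @ [h p]" and lp: "length p = k" and py: "p @ [y] \<in> F1"
      using q'H unfolding H_def by blast
    from py obtain a where a: "a \<in> F" "take (Suc k) a = p @ [y]" unfolding F1_def by (metis image_iff)
    have "a = p @ (y # drop (Suc k) a)" using a(2) by (metis append_take_drop_id append.assoc append_Cons append_Nil)
    then have ne: "\<exists>zs. p @ zs \<in> F" using a(1) by metis
    have "x = p @ g p" using x q unfolding g_def by simp
    then show "x \<in> {p @ g p | p. length p = k \<and> (\<exists>zs. p @ zs \<in> F)}" using lp ne by blast
  qed
  show ?case using P gD eq by (intro exI[of _ g]) simp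
qed

end

context dstruct
begin

lemma main:
  assumes ms: "definable_metric_space D n X dX"
  shows "definable_curve_selection D n X dX"
proof -
  define Gr where "Gr = {xs @ ys @ [dX xs ys] | xs ys. xs \<in> X \<and> ys \<in> X}"
  have X: "X \<in> D n" and G: "Gr \<in> D (n + n + 1)"
    and nn: "\<forall>x\<in>X. \<forall>y\<in>X. 0 \<le> dX x y"
    and z: "\<forall>x\<in>X. \<forall>y\<in>X. dX x y = 0 \<longleftrightarrow> x = y"
    using ms unfolding definable_metric_space_def Gr_def by auto
  have XL: "length x = n" if "x \<in> X" for x using D_len[OF X that] .
  have Gmem: "a @ b @ [t] \<in> Gr \<longleftrightarrow> a \<in> X \<and> b \<in> X \<and> t = dX a b"
    if la: "length a = n" and lb: "length b = n" for a b t
  proof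
    assume "a @ b @ [t] \<in> Gr"
    then obtain xs ys where e: "a @ b @ [t] = xs @ ys @ [dX xs ys]" and xy: "xs \<in> X" "ys \<in> X"
      unfolding Gr_def by blast
    have "a = xs \<and> b @ [t] = ys @ [dX xs ys]"
      using e append_eq_append_conv[of a xs "b @ [t]" "ys @ [dX xs ys]"] la XL[OF xy(1)] by simp
    then have "a = xs" "b = ys" "t = dX xs ys" by auto
    then show "a \<in> X \<and> b \<in> X \<and> t = dX a b" using xy by simp
  next
    assume "a \<in> X \<and> b \<in> X \<and> t = dX a b"
    then show "a @ b @ [t] \<in> Gr" unfolding Gr_def by blast
  qed
  show ?thesis unfolding definable_curve_selection_def
  proof (intro allI impI)
    fix C x assume C: "C \<in> D n" and CX: "C \<subseteq> X" and xf: "x \<in> mfrontier X dX C"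
    have xX: "x \<in> X" and xC: "x \<notin> C" and close: "\<forall>e>0. \<exists>y\<in>C. dX x y < e"
      using xf unfolding mfrontier_def mclosure_def mball_def by auto
    have lx: "length x = n" using XL[OF xX] .
    define v0 :: "nat \<Rightarrow> 'a" where "v0 = (\<lambda>_. 0)"
    define S0 where "S0 = {zs. \<exists>t y. zs = t # y \<and> y \<in> C \<and> t = dX x y}"
    have "dpred (\<lambda>v. map (\<lambda>i. v (Suc i)) [0..<n] \<in> C \<and> x @ map (\<lambda>i. v (Suc i)) [0..<n] @ [v 0] \<in> Gr)"
      by (intro dpred_intros dlist_intros dterm_intros) (rule C G)+
    then have S0': "{zs \<in> Mpow (Suc n). map (\<lambda>i. val (Suc n) zs v0 (Suc i)) [0..<n] \<in> C \<and>
        x @ map (\<lambda>i. val (Suc n) zs v0 (Suc i)) [0..<n] @ [val (Suc n) zs v0 0] \<in> Gr} \<in> D (Suc n)"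
      by (rule dpred_set)
    have S0eq: "{zs \<in> Mpow (Suc n). map (\<lambda>i. val (Suc n) zs v0 (Suc i)) [0..<n] \<in> C \<and>
        x @ map (\<lambda>i. val (Suc n) zs v0 (Suc i)) [0..<n] @ [val (Suc n) zs v0 0] \<in> Gr} = S0"
    proof (intro set_eqI iffI)
      fix zs assume "zs \<in> {zs \<in> Mpow (Suc n). map (\<lambda>i. val (Suc n) zs v0 (Suc i)) [0..<n] \<in> C \<and>
        x @ map (\<lambda>i. val (Suc n) zs v0 (Suc i)) [0..<n] @ [val (Suc n) zs v0 0] \<in> Gr}"
      then have lz: "length zs = Suc n" and m: "tl zs \<in> C" "x @ tl zs @ [zs ! 0] \<in> Gr"
        by (auto simp: val_tl val_nth)
      obtain t y where zs: "zs = t # y" using lz by (cases zs) auto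
      have ly: "length y = n" using lz zs by simp
      show "zs \<in> S0" using m zs Gmem[OF lx ly] unfolding S0_def by auto
    next
      fix zs assume "zs \<in> S0"
      then obtain t y where zs: "zs = t # y" and y: "y \<in> C" and t: "t = dX x y" unfolding S0_def by blast
      have ly: "length y = n" using XL y CX by blast
      have "x @ y @ [t] \<in> Gr" using Gmem[OF lx ly] xX y CX t by blast
      then show "zs \<in> {zs \<in> Mpow (Suc n). map (\<lambda>i. val (Suc n) zs v0 (Suc i)) [0..<n] \<in> C \<and>
        x @ map (\<lambda>i. val (Suc n) zs v0 (Suc i)) [0..<n] @ [val (Suc n) zs v0 0] \<in> Gr}"
        using zs ly y by (simp add: val_tl[of "t # y"] val_nth)
    qed
    define S where "S = {r. \<exists>y\<in>C. r = dX x y}"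
    have "take 1 ` S0 \<in> D 1" using S0' S0eq D_take[of S0 1 n] by simp
    moreover have "take 1 ` S0 = (\<lambda>r. [r]) ` S"
      unfolding S0_def S_def by force
    ultimately have dS: "dset1 D S" by (simp add: dset1_def)
    have S0n: "0 \<notin> S"
    proof
      assume "0 \<in> S"
      then obtain y where "y \<in> C" "0 = dX x y" unfolding S_def by blast
      then show False using z xX CX xC by (metis subsetD)
    qed
    have acc: "\<forall>u>0. \<exists>r\<in>S. 0 < r \<and> r < u"
    proof (intro allI impI)
      fix u :: 'a assume "0 < u"
      then obtain y where y: "y \<in> C" "dX x y < u" using close by blast
      have "0 \<le> dX x y" using nn xX y CX by blast
      moreover have "dX x y \<noteq> 0" using z xX y CX xC by (metis subsetD)
      ultimately show "\<exists>r\<in>S. 0 < r \<and> r < u" using y unfolding S_def by force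
    qed
    obtain eps where eps: "0 < eps" "\<forall>w. 0 < w \<and> w < eps \<longrightarrow> w \<in> S"
      using lom_right[OF dS S0n acc] by blast
    define F where "F = {zs. \<exists>t y. zs = t # y \<and> 0 < t \<and> t < eps \<and> y \<in> C \<and> t = dX x y}"
    have "dpred (\<lambda>v. 0 < v 0 \<and> v 0 < eps \<and> map (\<lambda>i. v (Suc i)) [0..<n] \<in> C \<and>
        x @ map (\<lambda>i. v (Suc i)) [0..<n] @ [v 0] \<in> Gr)"
      by (intro dpred_intros dlist_intros dterm_intros) (rule C G)+
    then have F': "{zs \<in> Mpow (Suc n). 0 < val (Suc n) zs v0 0 \<and> val (Suc n) zs v0 0 < eps \<and>
        map (\<lambda>i. val (Suc n) zs v0 (Suc i)) [0..<n] \<in> C \<and>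
        x @ map (\<lambda>i. val (Suc n) zs v0 (Suc i)) [0..<n] @ [val (Suc n) zs v0 0] \<in> Gr} \<in> D (Suc n)"
      by (rule dpred_set)
    have Feq: "{zs \<in> Mpow (Suc n). 0 < val (Suc n) zs v0 0 \<and> val (Suc n) zs v0 0 < eps \<and>
        map (\<lambda>i. val (Suc n) zs v0 (Suc i)) [0..<n] \<in> C \<and>
        x @ map (\<lambda>i. val (Suc n) zs v0 (Suc i)) [0..<n] @ [val (Suc n) zs v0 0] \<in> Gr} = F"
    proof (intro set_eqI iffI)
      fix zs assume "zs \<in> {zs \<in> Mpow (Suc n). 0 < val (Suc n) zs v0 0 \<and> val (Suc n) zs v0 0 < eps \<and>
        map (\<lambda>i. val (Suc n) zs v0 (Suc i)) [0..<n] \<in> C \<and>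
        x @ map (\<lambda>i. val (Suc n) zs v0 (Suc i)) [0..<n] @ [val (Suc n) zs v0 0] \<in> Gr}"
      then have lz: "length zs = Suc n" and m: "0 < zs ! 0" "zs ! 0 < eps" "tl zs \<in> C"
        "x @ tl zs @ [zs ! 0] \<in> Gr"
        by (auto simp: val_tl val_nth)
      obtain t y where zs: "zs = t # y" using lz by (cases zs) auto
      have ly: "length y = n" using lz zs by simp
      show "zs \<in> F" using m zs Gmem[OF lx ly] unfolding F_def by auto
    next
      fix zs assume "zs \<in> F"
      then obtain t y where zs: "zs = t # y" and y: "y \<in> C" and t: "t = dX x y" "0 < t" "t < eps"
        unfolding F_def by blast
      have ly: "length y = n" using XL y CX by blast
      have "x @ y @ [t] \<in> Gr" using Gmem[OF lx ly] xX y CX t by blast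
      then show "zs \<in> {zs \<in> Mpow (Suc n). 0 < val (Suc n) zs v0 0 \<and> val (Suc n) zs v0 0 < eps \<and>
        map (\<lambda>i. val (Suc n) zs v0 (Suc i)) [0..<n] \<in> C \<and>
        x @ map (\<lambda>i. val (Suc n) zs v0 (Suc i)) [0..<n] @ [val (Suc n) zs v0 0] \<in> Gr}"
      proof -
        have v1: "map (\<lambda>i. val (Suc n) zs v0 (Suc i)) [0..<n] = y" using val_tl[of zs n v0] zs ly by simp
        have v2: "val (Suc n) zs v0 0 = t" using zs by (simp add: val_nth)
        have "length zs = Suc n" using zs ly by simp
        then show ?thesis using v1 v2 y t \<open>x @ y @ [t] \<in> Gr\<close> by simp
      qed
    qed
    have FD: "F \<in> D (1 + n)" using F' Feq by simp
    obtain g where g1: "\<forall>p. length p = 1 \<longrightarrow> (\<exists>zs. p @ zs \<in> F) \<longrightarrow> p @ g p \<in> F"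
      and gD: "{p @ g p | p. length p = 1 \<and> (\<exists>zs. p @ zs \<in> F)} \<in> D (1 + n)"
      using choice[OF FD] by blast
    define \<gamma> where "\<gamma> t = g [t]" for t
    have neF: "(\<exists>zs. [t] @ zs \<in> F) \<longleftrightarrow> 0 < t \<and> t < eps" for t
    proof
      assume "\<exists>zs. [t] @ zs \<in> F"
      then show "0 < t \<and> t < eps" unfolding F_def by auto
    next
      assume t: "0 < t \<and> t < eps"
      then have "t \<in> S" using eps(2) by blast
      then obtain y where "y \<in> C" "t = dX x y" unfolding S_def by blast
      then show "\<exists>zs. [t] @ zs \<in> F" using t unfolding F_def by auto
    qed
    have gam: "\<gamma> t \<in> C \<and> dX x (\<gamma> t) = t" if "0 < t" "t < eps" for t
    proof -
      have "\<exists>zs. [t] @ zs \<in> F" using neF that by blast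
      moreover have "length [t] = 1" by simp
      ultimately have "[t] @ g [t] \<in> F" using g1 by blast
      then show ?thesis unfolding F_def \<gamma>_def by auto
    qed
    have oint_iff: "s \<in> oint (Some a) (Some b) \<longleftrightarrow> a < s \<and> s < b" for s a b :: 'a
      by (simp add: oint_def)
    have curve: "definable_curve D n C 0 (Some eps) \<gamma>"
      unfolding definable_curve_def
    proof (intro conjI)
      obtain t where "0 < t" "t < eps" using dense[OF eps(1)] by blast
      then have "t \<in> oint (Some 0) (Some eps)" by (simp add: oint_iff)
      then show "oint (Some 0) (Some eps) \<noteq> {}" by blast
      show "\<forall>t\<in>oint (Some 0) (Some eps). \<gamma> t \<in> C" using gam by (simp add: oint_iff)
      have "{t # \<gamma> t | t. t \<in> oint (Some 0) (Some eps)} = {p @ g p | p. length p = 1 \<and> (\<exists>zs. p @ zs \<in> F)}"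
      proof (intro set_eqI iffI)
        fix w assume "w \<in> {t # \<gamma> t | t. t \<in> oint (Some 0) (Some eps)}"
        then obtain t where w: "w = t # \<gamma> t" and t: "t \<in> oint (Some 0) (Some eps)" by blast
        have t': "0 < t \<and> t < eps" using t by (simp add: oint_iff)
        have ne: "\<exists>zs. [t] @ zs \<in> F" using neF t' by blast
        have "w = [t] @ g [t]" using w by (simp add: \<gamma>_def)
        then show "w \<in> {p @ g p | p. length p = 1 \<and> (\<exists>zs. p @ zs \<in> F)}"
          using ne by (intro CollectI exI[of _ "[t]"]) simp
      next
        fix w assume "w \<in> {p @ g p | p. length p = 1 \<and> (\<exists>zs. p @ zs \<in> F)}"
        then obtain p where w: "w = p @ g p" and lp: "length p = 1" and ne: "\<exists>zs. p @ zs \<in> F" by blast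
        obtain t where p: "p = [t]" using lp by (cases p) auto
        have "\<exists>zs. [t] @ zs \<in> F" using ne p by simp
        then have "0 < t \<and> t < eps" using neF by blast
        then have t: "t \<in> oint (Some 0) (Some eps)" by (simp add: oint_iff)
        have "w = t # \<gamma> t" using w p by (simp add: \<gamma>_def)
        then show "w \<in> {t # \<gamma> t | t. t \<in> oint (Some 0) (Some eps)}"
          using t by (intro CollectI exI[of _ t]) simp
      qed
      then show "{t # \<gamma> t | t. t \<in> oint (Some 0) (Some eps)} \<in> D (Suc n)" using gD by simp
    qed
    have conv: "x \<in> conv_left D n X dX 0 (Some eps) \<gamma>"
      unfolding conv_left_def
    proof (intro CollectI conjI ballI allI impI)
      show "x \<in> X" by (rule xX)
      fix t A assume t: "t \<in> oint (Some 0) (Some eps)" and A: "def_nbhd D n X dX A x"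
      obtain e where e: "0 < e" "mball X dX x e \<subseteq> A" using A unfolding def_nbhd_def by blast
      have t': "0 < t" "t < eps" using t oint_iff by auto
      obtain s where s: "0 < s" "s < min e t" using dense[of 0 "min e t"] e(1) t'(1) by auto
      have se: "s < eps" using s t' by (meson less_trans min.strict_boundedE)
      have gs: "\<gamma> s \<in> C" "dX x (\<gamma> s) = s" using gam[OF s(1) se] by auto
      have "\<gamma> s \<in> mball X dX x e" unfolding mball_def using gs CX s by auto
      then have "\<gamma> s \<in> A" using e(2) by blast
      moreover have "s \<in> oint (Some 0) (Some t)" using s oint_iff by auto
      ultimately show "\<gamma> ` oint (Some 0) (Some t) \<inter> A \<noteq> {}" by blast
    qed
    show "\<exists>a b \<gamma>. definable_curve D n C a b \<gamma> \<and> x \<in> conv_left D n X dX a b \<gamma>"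
      using curve conv by blast
  qed
qed

end

theorem proposition4p19:
  fixes D :: "nat \<Rightarrow> ('a::{linorder,group_add}) list set set"
    and n :: nat and X :: "'a list set" and dX :: "'a list \<Rightarrow> 'a list \<Rightarrow> 'a"
  assumes "dense_ordered_group TYPE('a)"
    and "expands_ordered_group D"
    and "locally_o_minimal D"
    and "definably_complete D"
    and "definable_metric_space D n X dX"
  shows "definable_curve_selection D n X dX"
proof -
  interpret dstruct D using assms(1-4) by unfold_locales
  show ?thesis using main[OF assms(5)] .
qed


end
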